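(* There exist a sequence $\{a_n\}_{n\in\mathbb Z}\in\ell^1(\mathbb Z)$ with $a_n>0$ for all $n$, and an infinite sequence $\{n_k\}_{k\ge1}\subset\mathbb N$ with $n_{k+1}>2n_k$ for all $k\ge1$, such that the entire functions $$h(z)=\sin\pi z\sum_{n\in\mathbb Z}\frac{a_n}{z-n},\qquad S(z)=\sin\pi z\sum_{n\in\mathbb Z}\frac{a_n^2}{z-n}$$ both vanish at the points $s_k=n_k+\tfrac12$, $k\in\mathbb N$, and $a_{n_k}=\alpha_kk^{-2}$ with $\alpha_k\in(1,3)$ for all $k\in\mathbb N$. *)

theory Defs
  imports "HOL-Analysis.Analysis"
begin

definition sin_cauchy :: "(int \<Rightarrow> real) \<Rightarrow> complex \<Rightarrow> complex" where
  "sin_cauchy b z = sin (of_real pi * z) * (\<Sum>\<^sub>\<infinity> n\<in>(UNIV::int set). of_real (b n) / (z - of_int n))"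

end

theory Submission
  imports Defs
begin

lemma contraction_fix:
  fixes T :: "('i \<Rightarrow> real) \<Rightarrow> ('i \<Rightarrow> real)" and c :: real
  defines "B \<equiv> {z. \<forall>i. 0 \<le> z i \<and> z i \<le> c}"
  assumes c: "0 \<le> c"
  assumes into: "\<And>z i. z \<in> B \<Longrightarrow> 0 \<le> T z i \<and> T z i \<le> c"
  assumes lip: "\<And>z z' \<delta>. z \<in> B \<Longrightarrow> z' \<in> B \<Longrightarrow> (\<forall>i. \<bar>z i - z' i\<bar> \<le> \<delta>) \<Longrightarrow> (\<forall>i. \<bar>T z i - T z' i\<bar> \<le> \<delta>/2)"
  shows "\<exists>z\<in>B. T z = z"
proof -
  define zs where "zs m = (T ^^ m) (\<lambda>_. 0)" for m
  have inB: "zs m \<in> B" for m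
    by (induction m) (auto simp: zs_def B_def c into)
  have step: "\<bar>zs (Suc m) i - zs m i\<bar> \<le> c / 2^m" for m i
  proof (induction m arbitrary: i)
    case 0
    have "zs 1 \<in> B" "zs 0 \<in> B" using inB by blast+
    then have "0 \<le> zs 1 i" "zs 1 i \<le> c" "0 \<le> zs 0 i" "zs 0 i \<le> c" by (auto simp: B_def)
    then show ?case by simp
  next
    case (Suc m)
    have "\<forall>i. \<bar>T (zs (Suc m)) i - T (zs m) i\<bar> \<le> (c/2^m)/2"
      by (rule lip[OF inB inB]) (use Suc in auto)
    then show ?case by (simp add: zs_def mult.commute)
  qed
  have tail: "\<bar>zs (m + d) i - zs m i\<bar> \<le> 2*c/2^m - 2*c/2^(m+d)" for m d i
  proof (induction d)
    case 0 then show ?case by simp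
  next
    case (Suc d)
    have "\<bar>zs (m + Suc d) i - zs m i\<bar> \<le> \<bar>zs (Suc (m + d)) i - zs (m+d) i\<bar> + \<bar>zs (m + d) i - zs m i\<bar>"
      by simp
    also have "\<dots> \<le> c/2^(m+d) + (2*c/2^m - 2*c/2^(m+d))" using step Suc by (intro add_mono) auto
    also have "\<dots> = 2*c/2^m - 2*c/2^(m + Suc d)" by (simp add: field_simps)
    finally show ?case .
  qed
  have tail2: "\<bar>zs n i - zs m i\<bar> \<le> 2*c/2^m" if "m \<le> n" for m n i
  proof -
    from le_Suc_ex[OF that] obtain d where n: "n = m + d" by blast
    have "0 \<le> 2*c/2^(m+d)" using c by simp
    then show ?thesis using tail[of m d i] unfolding n by linarith
  qed
  have conv: "convergent (\<lambda>m. zs m i)" for i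
  proof -
    have "Cauchy (\<lambda>m. zs m i)"
    proof (rule metric_CauchyI)
      fix e :: real assume e: "e > 0"
      obtain M where M: "2*c/2^M < e/2"
      proof -
        have "(\<lambda>M. 2*c/2^M) \<longlonglongrightarrow> 0"
          by (intro tendsto_divide_0[OF tendsto_const]) (simp add: filterlim_realpow_sequentially_gt1)
        moreover have "e/2 > 0" using e by simp
        ultimately have "\<forall>\<^sub>F M in sequentially. 2*c/2^M < e/2" by (simp only: order_tendsto_iff)
        then show ?thesis using that by (auto simp: eventually_sequentially)
      qed
      show "\<exists>M. \<forall>m\<ge>M. \<forall>n\<ge>M. dist (zs m i) (zs n i) < e"
      proof (intro exI allI impI)
        fix m n assume "M \<le> m" "M \<le> n"
        then have "\<bar>zs m i - zs M i\<bar> \<le> 2*c/2^M" "\<bar>zs n i - zs M i\<bar> \<le> 2*c/2^M" using tail2 by auto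
        then have "\<bar>zs m i - zs n i\<bar> \<le> 2*(2*c/2^M)" by linarith
        then show "dist (zs m i) (zs n i) < e" using M by (simp add: dist_real_def)
      qed
    qed
    then show ?thesis by (simp add: Cauchy_convergent_iff)
  qed

  define \<zeta> where "\<zeta> i = lim (\<lambda>m. zs m i)" for i
  have lim: "(\<lambda>m. zs m i) \<longlonglongrightarrow> \<zeta> i" for i
    using conv[of i] by (simp add: \<zeta>_def convergent_LIMSEQ_iff)
  have dz: "\<bar>\<zeta> i - zs m i\<bar> \<le> 2*c/2^m" for m i
  proof -
    have "(\<lambda>n. \<bar>zs n i - zs m i\<bar>) \<longlonglongrightarrow> \<bar>\<zeta> i - zs m i\<bar>"
      by (intro tendsto_intros lim)
    then show ?thesis by (rule LIMSEQ_le_const2) (use tail2 in auto)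
  qed
  have zB: "\<zeta> \<in> B"
  proof -
    have "0 \<le> \<zeta> i \<and> \<zeta> i \<le> c" for i
    proof
      show "0 \<le> \<zeta> i" by (rule LIMSEQ_le_const[OF lim]) (use inB in \<open>auto simp: B_def\<close>)
      show "\<zeta> i \<le> c" by (rule LIMSEQ_le_const2[OF lim]) (use inB in \<open>auto simp: B_def\<close>)
    qed
    then show ?thesis by (simp add: B_def)
  qed
  have "T \<zeta> i = \<zeta> i" for i
  proof -
    have b: "\<bar>T \<zeta> i - zs (Suc m) i\<bar> \<le> c/2^m" for m
    proof -
      have "\<forall>i. \<bar>T \<zeta> i - T (zs m) i\<bar> \<le> (2*c/2^m)/2"
        by (rule lip[OF zB inB]) (use dz in auto)
      then show ?thesis by (simp add: zs_def)
    qed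
    have "(\<lambda>m. zs (Suc m) i) \<longlonglongrightarrow> T \<zeta> i"
    proof (rule LIMSEQ_I)
      fix r :: real assume r: "0 < r"
      have "(\<lambda>M. c/2^M) \<longlonglongrightarrow> 0"
        by (intro tendsto_divide_0[OF tendsto_const]) (simp add: filterlim_realpow_sequentially_gt1)
      then have "\<forall>\<^sub>F M in sequentially. c/2^M < r" using r by (simp add: order_tendsto_iff)
      then obtain M where M: "\<And>m. m \<ge> M \<Longrightarrow> c/2^m < r" by (auto simp: eventually_sequentially)
      show "\<exists>no. \<forall>n\<ge>no. norm (zs (Suc n) i - T \<zeta> i) < r"
        using M b by (metis abs_minus_commute dual_order.strict_trans2 real_norm_def)
    qed
    moreover have "(\<lambda>m. zs (Suc m) i) \<longlonglongrightarrow> \<zeta> i" using lim by (rule LIMSEQ_Suc)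
    ultimately show ?thesis using LIMSEQ_unique by blast
  qed
  then show ?thesis using zB by blast
qed

definition Dd :: "real \<Rightarrow> real \<Rightarrow> real" where "Dd t R = t/3 + R/2"
definition Ee :: "real \<Rightarrow> real \<Rightarrow> real" where "Ee t P = t^2/3 + P/2"
definition xf :: "real \<Rightarrow> real \<Rightarrow> real \<Rightarrow> real" where "xf t R P = (Ee t P / Dd t R - Dd t R)/2"
definition yf :: "real \<Rightarrow> real \<Rightarrow> real \<Rightarrow> real" where "yf t R P = (Ee t P / Dd t R + Dd t R)/2"

lemma AL1:
  assumes u: "u \<ge> 1" and R: "\<bar>R\<bar> \<le> 1/(20*u)" and P: "\<bar>P\<bar> \<le> 1/u^2"
  shows "Dd (6/u) R \<ge> 1/u" "1/u < xf (6/u) R P" "xf (6/u) R P < 3/u" "0 < yf (6/u) R P" "yf (6/u) R P \<le> 5/u"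
    "Ee (6/u) P \<le> 18/u^2" "Ee (6/u) P > 0"
proof -
  define r where "r = R * u"
  define q where "q = P * u^2"
  have u0: "u > 0" using u by simp
  have r: "\<bar>r\<bar> \<le> 1/20" using R u0 by (simp add: r_def abs_mult field_simps)
  have q: "\<bar>q\<bar> \<le> 1" using P u0 by (simp add: q_def abs_mult field_simps)
  define \<delta> where "\<delta> = 2 + r/2"
  define \<epsilon> where "\<epsilon> = 12 + q/2"
  have D: "Dd (6/u) R = \<delta> / u" using u0 by (simp add: Dd_def \<delta>_def r_def field_simps)
  have E: "Ee (6/u) P = \<epsilon> / u^2" using u0 by (simp add: Ee_def \<epsilon>_def q_def field_simps power2_eq_square)
  have d1: "\<delta> \<ge> 2 - 1/40" "\<delta> \<le> 2 + 1/40" using r unfolding \<delta>_def by (auto simp: abs_le_iff)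
  have e1: "\<epsilon> \<ge> 23/2" "\<epsilon> \<le> 25/2" using q unfolding \<epsilon>_def by (auto simp: abs_le_iff)
  have ED: "Ee (6/u) P / Dd (6/u) R = (\<epsilon>/\<delta>) / u" using u0 d1 unfolding D E by (simp add: field_simps power2_eq_square)
  have q1: "\<epsilon>/\<delta> \<ge> (23/2)/(2+1/40)"
    using d1 e1 by (intro frac_le) auto
  have q2: "\<epsilon>/\<delta> \<le> (25/2)/(2-1/40)"
    using d1 e1 by (intro frac_le) auto
  have dp: "\<delta> > 0" using d1 by simp
  have X: "xf (6/u) R P = ((\<epsilon>/\<delta> - \<delta>)/2) / u" unfolding xf_def ED unfolding D using u0 dp by (simp add: field_simps)
  have Y: "yf (6/u) R P = ((\<epsilon>/\<delta> + \<delta>)/2) / u" unfolding yf_def ED unfolding D using u0 dp by (simp add: field_simps)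
  have xa: "1 < (\<epsilon>/\<delta> - \<delta>)/2" "(\<epsilon>/\<delta> - \<delta>)/2 < 3" using q1 q2 d1 by simp_all
  have ya: "0 < (\<epsilon>/\<delta> + \<delta>)/2" "(\<epsilon>/\<delta> + \<delta>)/2 \<le> 5" using q1 q2 d1 by simp_all
  show "Dd (6/u) R \<ge> 1/u" unfolding D using d1 u0 by (intro divide_right_mono) auto
  show "1/u < xf (6/u) R P" unfolding X by (rule divide_strict_right_mono[OF xa(1) u0])
  show "xf (6/u) R P < 3/u" unfolding X by (rule divide_strict_right_mono[OF xa(2) u0])
  show "0 < yf (6/u) R P" unfolding Y using ya(1) u0 by simp
  show "yf (6/u) R P \<le> 5/u" unfolding Y by (rule divide_right_mono[OF ya(2)]) (use u0 in simp)
  show "Ee (6/u) P \<le> 18/u^2" unfolding E using e1 u0 by (intro divide_right_mono) auto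
  show "Ee (6/u) P > 0" unfolding E using e1 u0 by simp
qed

lemma AL2:
  assumes u: "u \<ge> 1" and R: "\<bar>R1\<bar> \<le> 1/(20*u)" "\<bar>R2\<bar> \<le> 1/(20*u)" and P: "\<bar>P1\<bar> \<le> 1/u^2" "\<bar>P2\<bar> \<le> 1/u^2"
  shows "\<bar>xf (6/u) R1 P1 - xf (6/u) R2 P2\<bar> \<le> (u/4) * \<bar>P1 - P2\<bar> + 5 * \<bar>R1 - R2\<bar>"
    "\<bar>yf (6/u) R1 P1 - yf (6/u) R2 P2\<bar> \<le> (u/4) * \<bar>P1 - P2\<bar> + 5 * \<bar>R1 - R2\<bar>"
proof -
  have u0: "u > 0" using u by simp
  have iu: "1/u > 0" using u0 by simp
  define D1 D2 E1 E2 where "D1 = Dd (6/u) R1" "D2 = Dd (6/u) R2" "E1 = Ee (6/u) P1" "E2 = Ee (6/u) P2"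
  have D1: "D1 \<ge> 1/u" and D2: "D2 \<ge> 1/u" and E2: "E2 \<le> 18/u^2" and E2n: "E2 > 0"
    using AL1[OF u R(1) P(1)] AL1[OF u R(2) P(2)] by (simp_all add: D1_D2_E1_E2_def)
  have p1: "D1 > 0" "D2 > 0" using D1 D2 iu by linarith+
  have dD: "D1 - D2 = (R1 - R2)/2" by (simp add: D1_D2_E1_E2_def Dd_def field_simps)
  have aD: "\<bar>D1 - D2\<bar> = \<bar>R1 - R2\<bar>/2" unfolding dD by simp
  have dE: "E1 - E2 = (P1 - P2)/2" by (simp add: D1_D2_E1_E2_def Ee_def field_simps)
  have aE: "\<bar>E1 - E2\<bar> = \<bar>P1 - P2\<bar>/2" unfolding dE by simp
  have id: "E1/D1 - E2/D2 = (E1 - E2)/D1 + E2 * (D2 - D1) / (D1*D2)" using p1 by (simp add: field_simps)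
  have iD1: "1/D1 \<le> u" using D1 u0 p1 by (simp add: field_simps)
  have iD2: "1/D2 \<le> u" using D2 u0 p1 by (simp add: field_simps)
  have iD12: "1/(D1*D2) \<le> u^2"
  proof -
    have "1/(D1*D2) = (1/D1)*(1/D2)" by simp
    also have "\<dots> \<le> u * u" using iD1 iD2 p1 u0 by (intro mult_mono) simp_all
    finally show ?thesis by (simp add: power2_eq_square)
  qed
  have t1: "\<bar>(E1 - E2)/D1\<bar> \<le> u * \<bar>E1 - E2\<bar>"
  proof -
    have "\<bar>(E1 - E2)/D1\<bar> = \<bar>E1 - E2\<bar> * (1/D1)" using p1 by (simp add: abs_divide)
    also have "\<dots> \<le> \<bar>E1 - E2\<bar> * u" by (intro mult_left_mono iD1) simp
    finally show ?thesis by (simp add: mult.commute)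
  qed
  have t2: "\<bar>E2 * (D2 - D1) / (D1*D2)\<bar> \<le> 18 * \<bar>D1 - D2\<bar>"
  proof -
    have "\<bar>E2 * (D2 - D1) / (D1*D2)\<bar> = E2 * (1/(D1*D2)) * \<bar>D1 - D2\<bar>"
      using p1 E2n by (simp add: abs_divide abs_mult abs_minus_commute)
    also have "\<dots> \<le> (18/u^2) * u^2 * \<bar>D1 - D2\<bar>"
      by (intro mult_right_mono mult_mono E2 iD12) (use E2n p1 in auto)
    also have "\<dots> = 18 * \<bar>D1 - D2\<bar>" using u0 by simp
    finally show ?thesis .
  qed
  have q0: "\<bar>E1/D1 - E2/D2\<bar> \<le> u * \<bar>E1 - E2\<bar> + 18 * \<bar>D1 - D2\<bar>"
    unfolding id using t1 t2 abs_triangle_ineq[of "(E1 - E2)/D1" "E2 * (D2 - D1) / (D1*D2)"] by linarith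
  have q: "\<bar>E1/D1 - E2/D2\<bar> \<le> (u/2) * \<bar>P1 - P2\<bar> + 9 * \<bar>R1 - R2\<bar>"
    using q0 unfolding aE aD by simp
  have ex: "xf (6/u) R1 P1 - xf (6/u) R2 P2 = ((E1/D1 - E2/D2) - (D1 - D2))/2"
    unfolding xf_def D1_D2_E1_E2_def[symmetric] by (simp add: diff_divide_distrib add_divide_distrib algebra_simps)
  have ey: "yf (6/u) R1 P1 - yf (6/u) R2 P2 = ((E1/D1 - E2/D2) + (D1 - D2))/2"
    unfolding yf_def D1_D2_E1_E2_def[symmetric] by (simp add: diff_divide_distrib add_divide_distrib algebra_simps)
  have r0: "\<bar>R1 - R2\<bar> \<ge> 0" by simp
  show "\<bar>xf (6/u) R1 P1 - xf (6/u) R2 P2\<bar> \<le> (u/4) * \<bar>P1 - P2\<bar> + 5 * \<bar>R1 - R2\<bar>"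
    unfolding ex using q aD abs_triangle_ineq4[of "E1/D1 - E2/D2" "D1 - D2"] r0 by (simp add: abs_divide) (smt (verit) abs_ge_zero)
  show "\<bar>yf (6/u) R1 P1 - yf (6/u) R2 P2\<bar> \<le> (u/4) * \<bar>P1 - P2\<bar> + 5 * \<bar>R1 - R2\<bar>"
    unfolding ey using q aD abs_triangle_ineq[of "E1/D1 - E2/D2" "D1 - D2"] r0 by (simp add: abs_divide) (smt (verit) abs_ge_zero)
qed

definition NN :: "nat \<Rightarrow> nat" where "NN j = 1000 * 256^j"
definition ss :: "nat \<Rightarrow> real" where "ss k = real (NN k) + 1/2"
definition pp :: "nat \<Rightarrow> int" where "pp m = int (NN (m div 3 + 1)) + int (m mod 3) - 1"
definition tt :: "nat \<Rightarrow> real" where "tt j = 6 / (real j)^2"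
definition vv :: "(nat \<times> bool \<Rightarrow> real) \<Rightarrow> nat \<Rightarrow> real" where
  "vv z m = (if m mod 3 = 0 then tt (m div 3 + 1) else z (m div 3 + 1, m mod 3 = 2))"
definition Pos :: "int set" where "Pos = range pp"
definition bg :: "int \<Rightarrow> real" where "bg n = (1/4)^(nat \<bar>n\<bar>)"

lemma NN_real: "real (NN j) = 1000 * 256^j" by (simp add: NN_def)

lemma pow256: "(256::real)^j = 2^(8*j)"
  by (simp add: power_mult)

lemma sep:
  assumes k: "k \<ge> 1" and mk: "m div 3 + 1 \<noteq> k"
  shows "\<bar>ss k - real_of_int (pp m)\<bar> \<ge> 500 * 2^(4*k+m)"
proof -
  define j where "j = m div 3 + 1"
  have mj: "m < 3*j" unfolding j_def by presburger
  have pp: "real_of_int (pp m) = 1000 * 256^j + real (m mod 3) - 1"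
    by (simp add: pp_def NN_def j_def)
  have mod3: "real (m mod 3) \<le> 2" by simp
  have ssk: "ss k = 1000 * 256^k + 1/2" by (simp add: ss_def NN_def)
  show ?thesis
  proof (cases "j < k")
    case True
    have "(256::real)^j * 256 \<le> 256^k"
      using power_increasing[of "Suc j" k "256::real"] True by simp
    moreover have "(2::real)^(4*k+m) \<le> 256^k"
      unfolding pow256 by (rule power_increasing) (use mj True in auto)
    moreover have "(1::real) \<le> 256^j" by simp
    ultimately have "ss k - real_of_int (pp m) \<ge> 500 * 2^(4*k+m)"
      unfolding pp ssk using mod3 by linarith
    then show ?thesis by linarith
  next
    case False
    then have jk: "k < j" using mk j_def by simp
    have "(256::real)^k * 256 \<le> 256^j"
      using power_increasing[of "Suc k" j "256::real"] jk by simp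
    moreover have "(2::real)^(4*k+m) \<le> 256^j"
      unfolding pow256 by (rule power_increasing) (use mj jk in auto)
    moreover have "(1::real) \<le> 256^j" by simp
    ultimately have "real_of_int (pp m) - ss k \<ge> 500 * 2^(4*k+m)"
      unfolding pp ssk using mod3 by linarith
    then show ?thesis by linarith
  qed
qed

lemma inj_pp: "inj pp"
proof (rule injI)
  fix m m' assume eq: "pp m = pp m'"
  show "m = m'"
  proof (cases "m div 3 = m' div 3")
    case True
    then have "m mod 3 = m' mod 3" using eq by (simp add: pp_def)
    then show ?thesis using True by (metis div_mod_decomp)
  next
    case False
    have gap: "int (NN a) + 3 < int (NN b)" if "a < b" for a b
    proof -
      have "(256::nat)^a * 256 \<le> 256^b"
        using power_increasing[of "Suc a" b "256::nat"] that by simp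
      moreover have "(1::nat) \<le> 256^a" by simp
      ultimately have "1000 * 256^a + 3 < (1000 * 256^b::nat)" by linarith
      then show ?thesis unfolding NN_def by linarith
    qed
    have r: "int (m mod 3) \<le> 2" "int (m' mod 3) \<le> 2" by simp_all
    from False have "m div 3 + 1 < m' div 3 + 1 \<or> m' div 3 + 1 < m div 3 + 1" by auto
    then show ?thesis
      using gap[of "m div 3 + 1" "m' div 3 + 1"] gap[of "m' div 3 + 1" "m div 3 + 1"] eq r
      by (auto simp: pp_def)
  qed
qed

lemma inv_pp[simp]: "inv pp (pp m) = m"
  using inj_pp by (simp add: inv_f_f)

lemma geom: "summable (\<lambda>m. (1/2::real)^(4*k+m))" "(\<Sum>m. (1/2::real)^(4*k+m)) = 2 * (1/16)^k"
proof -
  have e: "(\<lambda>m. (1/2::real)^(4*k+m)) = (\<lambda>m. (1/16)^k * (1/2)^m)"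
    by (simp add: power_add power_mult power_divide)
  show "summable (\<lambda>m. (1/2::real)^(4*k+m))" unfolding e
    by (intro summable_mult summable_geometric) simp
  show "(\<Sum>m. (1/2::real)^(4*k+m)) = 2 * (1/16)^k" unfolding e
    by (subst suminf_mult) (auto simp: suminf_geometric)
qed

lemma suminf_abs_bound:
  fixes f g :: "nat \<Rightarrow> real"
  assumes "\<And>m. \<bar>f m\<bar> \<le> g m" "summable g"
  shows "summable (\<lambda>m. \<bar>f m\<bar>)" "summable f" "\<bar>suminf f\<bar> \<le> suminf g"
proof -
  show a: "summable (\<lambda>m. \<bar>f m\<bar>)" by (rule summable_rabs_comparison_test) (use assms in auto)
  show "summable f" using a by (rule summable_rabs_cancel)
  have "\<bar>suminf f\<bar> \<le> (\<Sum>m. \<bar>f m\<bar>)" using a by (rule summable_rabs)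
  also have "\<dots> \<le> suminf g" by (rule suminf_le) (use assms a in auto)
  finally show "\<bar>suminf f\<bar> \<le> suminf g" .
qed

definition gB :: "(real \<Rightarrow> real) \<Rightarrow> (nat\<times>bool \<Rightarrow> real) \<Rightarrow> nat \<Rightarrow> nat \<Rightarrow> real" where
  "gB \<phi> z k m = \<phi> (vv z m) / (ss k - real_of_int (pp m))"
definition rest :: "(real \<Rightarrow> real) \<Rightarrow> (nat\<times>bool \<Rightarrow> real) \<Rightarrow> nat \<Rightarrow> real" where
  "rest \<phi> z k = (\<Sum>m. if m div 3 + 1 = k then 0 else gB \<phi> z k m)"
definition hb :: "(real \<Rightarrow> real) \<Rightarrow> nat \<Rightarrow> int \<Rightarrow> real" where
  "hb \<phi> k n = (if n \<in> Pos then 0 else \<phi> (bg n) / (ss k - real_of_int n))"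
definition bgs :: "(real \<Rightarrow> real) \<Rightarrow> nat \<Rightarrow> real" where
  "bgs \<phi> k = (\<Sum>m. hb \<phi> k (int m)) + (\<Sum>m. hb \<phi> k (- int m - 1))"
definition Rr :: "(real \<Rightarrow> real) \<Rightarrow> (nat\<times>bool \<Rightarrow> real) \<Rightarrow> nat \<Rightarrow> real" where
  "Rr \<phi> z k = rest \<phi> z k + bgs \<phi> k"
definition loc :: "(real \<Rightarrow> real) \<Rightarrow> (nat\<times>bool \<Rightarrow> real) \<Rightarrow> nat \<Rightarrow> real" where
  "loc \<phi> z k = \<phi> (tt k) * (2/3) + \<phi> (z (k,False)) * 2 - \<phi> (z (k,True)) * 2"
definition Bx :: "(nat\<times>bool \<Rightarrow> real) set" where "Bx = {z. \<forall>i. 0 \<le> z i \<and> z i \<le> 5}"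

lemma tt_bounds: "j \<ge> 1 \<Longrightarrow> 0 < tt j \<and> tt j \<le> 6"
  by (auto simp: tt_def field_simps)

lemma vv_bounds: assumes "z \<in> Bx" shows "0 \<le> vv z m \<and> vv z m \<le> 6"
proof -
  have h: "0 \<le> z i \<and> z i \<le> 6" for i
  proof -
    have "0 \<le> z i \<and> z i \<le> 5" using assms unfolding Bx_def by blast
    then show ?thesis by linarith
  qed
  show ?thesis using tt_bounds[of "m div 3 + 1"] h by (auto simp: vv_def)
qed

lemma vv_diff: "(\<forall>i. \<bar>z i - z' i\<bar> \<le> \<delta>) \<Longrightarrow> \<bar>vv z m - vv z' m\<bar> \<le> \<delta>"
  by (auto simp: vv_def) (meson abs_ge_zero order_trans)

lemma omega:
  assumes "k \<ge> 1" "m div 3 + 1 \<noteq> k"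
  shows "1 / \<bar>ss k - real_of_int (pp m)\<bar> \<le> (1/500) * (1/2)^(4*k+m)"
proof -
  have s: "\<bar>ss k - real_of_int (pp m)\<bar> \<ge> 500 * 2^(4*k+m)" by (rule sep[OF assms])
  have p: "(0::real) < 500 * 2^(4*k+m)" by simp
  have "1 / \<bar>ss k - real_of_int (pp m)\<bar> \<le> 1 / (500 * 2^(4*k+m))"
  proof (rule divide_left_mono[OF s])
    show "0 < \<bar>ss k - real_of_int (pp m)\<bar> * (500 * 2^(4*k+m))"
      using p s by (intro mult_pos_pos) linarith+
  qed simp
  also have "\<dots> = (1/500) * (1/2)^(4*k+m)" by (simp add: power_divide)
  finally show ?thesis .
qed

lemma term_bound:
  assumes "k \<ge> 1" "m div 3 + 1 \<noteq> k" "\<bar>a\<bar> \<le> M"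
  shows "\<bar>a / (ss k - real_of_int (pp m))\<bar> \<le> M * ((1/500) * (1/2)^(4*k+m))"
proof -
  have "\<bar>a / (ss k - real_of_int (pp m))\<bar> = \<bar>a\<bar> * (1 / \<bar>ss k - real_of_int (pp m)\<bar>)"
    by (simp add: abs_divide)
  also have "\<dots> \<le> M * ((1/500) * (1/2)^(4*k+m))"
    by (rule mult_mono) (use assms omega[OF assms(1,2)] in auto)
  finally show ?thesis .
qed

lemma geomM: "summable (\<lambda>m. M * ((1/500) * (1/2::real)^(4*k+m)))"
    "(\<Sum>m. M * ((1/500) * (1/2::real)^(4*k+m))) = M * (1/250) * (1/16)^k"
proof -
  show "summable (\<lambda>m. M * ((1/500) * (1/2::real)^(4*k+m)))"
    by (intro summable_mult geom)
  have a: "(\<Sum>m. M * ((1/500) * (1/2::real)^(4*k+m))) = M * (\<Sum>m. (1/500) * (1/2::real)^(4*k+m))"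
    by (rule suminf_mult) (intro summable_mult geom)
  have b: "(\<Sum>m. (1/500) * (1/2::real)^(4*k+m)) = (1/500) * (\<Sum>m. (1/2::real)^(4*k+m))"
    by (rule suminf_mult) (rule geom)
  show "(\<Sum>m. M * ((1/500) * (1/2::real)^(4*k+m))) = M * (1/250) * (1/16)^k"
    unfolding a b geom(2) by simp
qed

lemma rest_bound:
  assumes k: "k \<ge> 1" and M: "\<And>m. \<bar>\<phi> (vv z m)\<bar> \<le> M"
  shows "summable (\<lambda>m. if m div 3 + 1 = k then 0 else gB \<phi> z k m)"
    "\<bar>rest \<phi> z k\<bar> \<le> M * (1/250) * (1/16)^k"
proof -
  have M0: "0 \<le> M" using M[of 0] by linarith
  have b: "\<bar>(if m div 3 + 1 = k then 0 else gB \<phi> z k m)\<bar> \<le> M * ((1/500) * (1/2)^(4*k+m))" for m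
    using term_bound[OF k _ M] M0 by (auto simp: gB_def)
  show "summable (\<lambda>m. if m div 3 + 1 = k then 0 else gB \<phi> z k m)"
    using suminf_abs_bound(2)[OF b geomM(1)] .
  have "\<bar>rest \<phi> z k\<bar> \<le> (\<Sum>m. M * ((1/500) * (1/2::real)^(4*k+m)))"
    unfolding rest_def by (rule suminf_abs_bound(3)[OF b geomM(1)])
  then show "\<bar>rest \<phi> z k\<bar> \<le> M * (1/250) * (1/16)^k" unfolding geomM(2) .
qed

lemma rest_lip:
  assumes k: "k \<ge> 1" and M: "\<And>m. \<bar>\<phi> (vv z m)\<bar> \<le> M" "\<And>m. \<bar>\<phi> (vv z' m)\<bar> \<le> M"
    and L: "\<And>m. \<bar>\<phi> (vv z m) - \<phi> (vv z' m)\<bar> \<le> L"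
  shows "\<bar>rest \<phi> z k - rest \<phi> z' k\<bar> \<le> L * (1/250) * (1/16)^k"
proof -
  have L0: "0 \<le> L" using L[of 0] by linarith
  have e: "rest \<phi> z k - rest \<phi> z' k = (\<Sum>m. (if m div 3 + 1 = k then 0 else gB \<phi> z k m) - (if m div 3 + 1 = k then 0 else gB \<phi> z' k m))"
    unfolding rest_def by (rule suminf_diff; rule rest_bound(1)[OF k]) (rule M(1), rule M(2))
  have b: "\<bar>(if m div 3 + 1 = k then 0 else gB \<phi> z k m) - (if m div 3 + 1 = k then 0 else gB \<phi> z' k m)\<bar>
      \<le> L * ((1/500) * (1/2)^(4*k+m))" for m
  proof (cases "m div 3 + 1 = k")
    case False
    then show ?thesis using term_bound[OF k False L[of m]] by (simp add: gB_def diff_divide_distrib)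
  qed (use L0 in simp)
  have "\<bar>rest \<phi> z k - rest \<phi> z' k\<bar> \<le> (\<Sum>m. L * ((1/500) * (1/2::real)^(4*k+m)))"
    unfolding e by (rule suminf_abs_bound(3)[OF b geomM(1)])
  then show ?thesis unfolding geomM(2) .
qed

lemma gB_summable:
  assumes k: "k \<ge> 1" and M: "\<And>m. \<bar>\<phi> (vv z m)\<bar> \<le> M"
  shows "summable (\<lambda>m. \<bar>gB \<phi> z k m\<bar>)"
proof (rule summable_rabs_comparison_test)
  show "\<exists>N. \<forall>m\<ge>N. \<bar>gB \<phi> z k m\<bar> \<le> M * ((1/500) * (1/2)^(4*k+m))"
  proof (intro exI allI impI)
    fix m assume "3*k \<le> m"
    then have "m div 3 + 1 \<noteq> k" by auto
    then show "\<bar>gB \<phi> z k m\<bar> \<le> M * ((1/500) * (1/2)^(4*k+m))"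
      unfolding gB_def by (rule term_bound[OF k _ M])
  qed
qed (rule geomM)

lemma block_pos:
  shows "pp (3*j) = int (NN (Suc j)) - 1" "pp (3*j+1) = int (NN (Suc j))" "pp (3*j+2) = int (NN (Suc j)) + 1"
    "vv z (3*j) = tt (Suc j)" "vv z (3*j+1) = z (Suc j,False)" "vv z (3*j+2) = z (Suc j,True)"
proof -
  have a: "(3*j) div 3 = j" "(3*j+1) div 3 = j" "(3*j+2) div 3 = j" "(3*j) mod 3 = 0" "(3*j+1) mod 3 = 1" "(3*j+2) mod 3 = 2"
    by presburger+
  show "pp (3*j) = int (NN (Suc j)) - 1" "pp (3*j+1) = int (NN (Suc j))" "pp (3*j+2) = int (NN (Suc j)) + 1"
    "vv z (3*j) = tt (Suc j)" "vv z (3*j+1) = z (Suc j,False)" "vv z (3*j+2) = z (Suc j,True)"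
    unfolding pp_def vv_def a by simp_all
qed

lemma gB_split:
  assumes k: "k \<ge> 1" and M: "\<And>m. \<bar>\<phi> (vv z m)\<bar> \<le> M"
  shows "suminf (gB \<phi> z k) = loc \<phi> z k + rest \<phi> z k"
proof -
  obtain j where kj: "k = Suc j" using k by (cases k) auto
  define F where "F = {3*j, 3*j+1, 3*j+2}"
  have inF: "m div 3 + 1 = k \<longleftrightarrow> m \<in> F" for m
    unfolding F_def kj by auto
  define f1 where "f1 m = (if m div 3 + 1 = k then gB \<phi> z k m else 0)" for m
  have f1z: "m \<notin> F \<Longrightarrow> f1 m = 0" for m using inF by (simp add: f1_def)
  have s1: "summable f1" by (rule summable_finite[of F]) (use f1z F_def in auto)
  have "suminf f1 = sum f1 F" by (rule suminf_finite) (use f1z F_def in auto)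
  also have "\<dots> = loc \<phi> z k"
  proof -
    have d: "3*j \<noteq> 3*j+1" "3*j \<noteq> 3*j+2" "3*j+1 \<noteq> 3*j+2" by auto
    have "sum f1 F = f1 (3*j) + f1 (3*j+1) + f1 (3*j+2)"
      unfolding F_def using d by simp
    moreover have "f1 (3*j) = \<phi> (tt k) * (2/3)"
    proof -
      have "(3*j) div 3 + 1 = k" unfolding kj by presburger
      then have "f1 (3*j) = gB \<phi> z k (3*j)" by (simp add: f1_def)
      also have "\<dots> = \<phi> (tt k) * (2/3)" unfolding gB_def block_pos kj ss_def by simp
      finally show ?thesis .
    qed
    moreover have "f1 (3*j+1) = \<phi> (z (k,False)) * 2"
    proof -
      have "(3*j+1) div 3 + 1 = k" unfolding kj by presburger
      then have "f1 (3*j+1) = gB \<phi> z k (3*j+1)" by (simp add: f1_def)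
      also have "\<dots> = \<phi> (z (k,False)) * 2" unfolding gB_def block_pos kj ss_def by simp
      finally show ?thesis .
    qed
    moreover have "f1 (3*j+2) = - \<phi> (z (k,True)) * 2"
    proof -
      have "(3*j+2) div 3 + 1 = k" unfolding kj by presburger
      then have "f1 (3*j+2) = gB \<phi> z k (3*j+2)" by (simp add: f1_def)
      also have "\<dots> = - \<phi> (z (k,True)) * 2" unfolding gB_def block_pos kj ss_def by simp
      finally show ?thesis .
    qed
    ultimately show ?thesis by (simp add: loc_def)
  qed
  finally have e1: "suminf f1 = loc \<phi> z k" .
  have "suminf (gB \<phi> z k) = (\<Sum>m. f1 m + (if m div 3 + 1 = k then 0 else gB \<phi> z k m))"
    by (rule arg_cong[where f=suminf]) (auto simp: f1_def)
  also have "\<dots> = suminf f1 + rest \<phi> z k"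
    unfolding rest_def by (rule suminf_add[symmetric]) (rule s1, rule rest_bound(1)[OF k, of \<phi> z M, OF M])
  finally show ?thesis using e1 by simp
qed

definition AA :: "(nat\<times>bool \<Rightarrow> real) \<Rightarrow> int \<Rightarrow> real" where
  "AA z n = (if n \<in> Pos then vv z (inv pp n) else bg n)"

lemma half_int: "\<bar>ss k - real_of_int n\<bar> \<ge> 1/2"
proof -
  define w where "w = int (NN k) - n"
  have e: "ss k - real_of_int n = real_of_int w + 1/2" by (simp add: ss_def w_def)
  show ?thesis
  proof (cases "w \<ge> 0")
    case True then show ?thesis unfolding e by simp
  next
    case False then have "real_of_int w \<le> -1" by simp
    then show ?thesis unfolding e by simp
  qed
qed

lemma ss_pos: "ss k > 0" by (simp add: ss_def)

lemma bg_facts: "0 < bg n" "bg n \<le> 1" "bg n * (1 + real (nat \<bar>n\<bar>)) \<le> (1/2)^(nat \<bar>n\<bar>)"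
proof -
  show "0 < bg n" "bg n \<le> 1" by (auto simp: bg_def power_le_one)
  define a where "a = nat \<bar>n\<bar>"
  have "1 + real a \<le> 2^a"
  proof -
    have "a < 2^a" by (rule less_exp)
    then have "Suc a \<le> 2^a" by (simp only: Suc_le_eq)
    then have "real (Suc a) \<le> real (2^a)" by (simp only: of_nat_le_iff)
    then show ?thesis by simp
  qed
  then have "(1/2)^a * (1 + real a) \<le> (1/2)^a * 2^a" by (intro mult_left_mono) auto
  also have "\<dots> = 1" by (simp add: power_mult_distrib[symmetric])
  finally have h: "(1/2)^a * (1 + real a) \<le> 1" .
  have "bg n * (1 + real a) = (1/2)^a * ((1/2)^a * (1 + real a))"
    by (simp add: bg_def a_def power_mult_distrib[symmetric])
  also have "\<dots> \<le> (1/2)^a * 1" by (intro mult_left_mono h) simp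
  finally show "bg n * (1 + real (nat \<bar>n\<bar>)) \<le> (1/2)^(nat \<bar>n\<bar>)" by (simp add: a_def)
qed

lemma hb_bound:
  assumes \<phi>: "\<And>y. 0 \<le> y \<Longrightarrow> y \<le> 1 \<Longrightarrow> \<bar>\<phi> y\<bar> \<le> y"
  shows "\<bar>hb \<phi> k n\<bar> \<le> 3 * (1/2)^(nat \<bar>n\<bar>) / (1 + ss k)"
proof (cases "n \<in> Pos")
  case True then show ?thesis using ss_pos[of k] by (simp add: hb_def)
next
  case False
  define a where "a = nat \<bar>n\<bar>"
  define d where "d = \<bar>ss k - real_of_int n\<bar>"
  have d2: "d \<ge> 1/2" unfolding d_def by (rule half_int)
  have sp: "ss k > 0" by (rule ss_pos)
  have an: "real a = \<bar>real_of_int n\<bar>" by (simp add: a_def)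
  have "ss k \<le> real a + d" unfolding an d_def by linarith
  moreover have "1 * real a \<le> (2 * d) * real a" using d2 by (intro mult_right_mono) auto
  ultimately have ssb: "1 + ss k \<le> 3 * d * (1 + real a)" using d2 by (simp add: algebra_simps)
  have bgf: "0 < bg n" "bg n \<le> 1" "bg n * (1 + real a) \<le> (1/2)^a" using bg_facts[of n] by (simp_all add: a_def)
  have "\<bar>hb \<phi> k n\<bar> = \<bar>\<phi> (bg n)\<bar> / d" using False by (simp add: hb_def d_def abs_divide)
  also have "\<dots> \<le> bg n / d" using \<phi>[of "bg n"] bgf d2 by (intro divide_right_mono) auto
  also have "\<dots> \<le> 3 * (1/2)^a / (1 + ss k)"
  proof -
    have "bg n * (1 + ss k) \<le> bg n * (3 * d * (1 + real a))" using ssb bgf by (intro mult_left_mono) auto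
    also have "\<dots> = 3 * d * (bg n * (1 + real a))" by simp
    also have "\<dots> \<le> 3 * d * (1/2)^a" using bgf d2 by (intro mult_left_mono) auto
    finally have "bg n * (1 + ss k) \<le> 3 * (1/2)^a * d" by (simp add: mult_ac)
    then show ?thesis using d2 sp by (simp add: divide_simps mult_ac)
  qed
  finally show ?thesis by (simp add: a_def)
qed

lemma ss_big: "12 / (1 + ss k) \<le> (12/1000) * (1/16)^k"
proof -
  have "(16::real)^k \<le> 256^k" by (intro power_mono) auto
  then have "1000 * 16^k \<le> 1 + ss k" by (simp add: ss_def NN_def)
  moreover have "(0::real) < 1000 * 16^k" by simp
  ultimately have "12 / (1 + ss k) \<le> 12 / (1000 * 16^k)"
    using ss_pos[of k] by (intro divide_left_mono mult_pos_pos) auto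
  also have "\<dots> = (12/1000) * (1/16)^k" by (simp add: power_divide)
  finally show ?thesis .
qed

lemma bgs_bound:
  assumes \<phi>: "\<And>y. 0 \<le> y \<Longrightarrow> y \<le> 1 \<Longrightarrow> \<bar>\<phi> y\<bar> \<le> y"
  shows "summable (\<lambda>m. \<bar>hb \<phi> k (int m)\<bar>)" "summable (\<lambda>m. \<bar>hb \<phi> k (- int m - 1)\<bar>)"
    "\<bar>bgs \<phi> k\<bar> \<le> (12/1000) * (1/16)^k"
proof -
  define c where "c = 3 / (1 + ss k)"
  have c0: "c \<ge> 0" using ss_pos[of k] by (simp add: c_def)
  have g: "summable (\<lambda>m. c * (1/2::real)^m)" "(\<Sum>m. c * (1/2::real)^m) = 2 * c"
    by (auto intro!: summable_mult summable_geometric simp: suminf_mult suminf_geometric)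
  have b1: "\<bar>hb \<phi> k (int m)\<bar> \<le> c * (1/2)^m" for m
    using hb_bound[OF \<phi>, of k "int m"] by (simp add: c_def)
  have b2: "\<bar>hb \<phi> k (- int m - 1)\<bar> \<le> c * (1/2)^m" for m
  proof -
    have "nat \<bar>- int m - 1\<bar> = Suc m" by simp
    then have "\<bar>hb \<phi> k (- int m - 1)\<bar> \<le> c * (1/2)^(Suc m)"
      using hb_bound[OF \<phi>, of k "- int m - 1"] by (simp add: c_def algebra_simps)
    also have "\<dots> \<le> c * (1/2)^m" using c0 by (intro mult_left_mono) (auto simp: power_decreasing)
    finally show ?thesis .
  qed
  show "summable (\<lambda>m. \<bar>hb \<phi> k (int m)\<bar>)" by (rule suminf_abs_bound(1)[OF b1 g(1)])
  show "summable (\<lambda>m. \<bar>hb \<phi> k (- int m - 1)\<bar>)" by (rule suminf_abs_bound(1)[OF b2 g(1)])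
  have "\<bar>bgs \<phi> k\<bar> \<le> \<bar>\<Sum>m. hb \<phi> k (int m)\<bar> + \<bar>\<Sum>m. hb \<phi> k (- int m - 1)\<bar>"
    unfolding bgs_def by (rule abs_triangle_ineq)
  also have "\<dots> \<le> 2 * c + 2 * c"
    using suminf_abs_bound(3)[OF b1 g(1)] suminf_abs_bound(3)[OF b2 g(1)] g(2) by linarith
  also have "\<dots> = 12 / (1 + ss k)" by (simp add: c_def)
  also have "\<dots> \<le> (12/1000) * (1/16)^k" by (rule ss_big)
  finally show "\<bar>bgs \<phi> k\<bar> \<le> (12/1000) * (1/16)^k" .
qed

lemma block_has_sum:
  fixes g :: "nat \<Rightarrow> real"
  assumes "summable (\<lambda>m. \<bar>g m\<bar>)"
  shows "((\<lambda>n. if n \<in> Pos then g (inv pp n) else 0) has_sum suminf g) UNIV"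
proof -
  have h: "(g has_sum suminf g) UNIV"
    by (rule norm_summable_imp_has_sum) (use assms summable_rabs_cancel in \<open>auto intro: summable_sums\<close>)
  have e: "(\<lambda>n. if n \<in> Pos then g (inv pp n) else 0) \<circ> pp = g"
    by (auto simp: Pos_def)
  have "((\<lambda>n. if n \<in> Pos then g (inv pp n) else 0) has_sum suminf g) (pp ` UNIV)"
    by (subst has_sum_reindex[OF inj_pp]) (simp add: e h)
  then show ?thesis
    by (subst has_sum_cong_neutral[where T = "pp ` UNIV" and g = "\<lambda>n. if n \<in> Pos then g (inv pp n) else 0"])
       (auto simp: Pos_def)
qed

lemma int_has_sum:
  fixes f :: "int \<Rightarrow> real"
  assumes "summable (\<lambda>m. \<bar>f (int m)\<bar>)" "summable (\<lambda>m. \<bar>f (- int m - 1)\<bar>)"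
  shows "(f has_sum ((\<Sum>m. f (int m)) + (\<Sum>m. f (- int m - 1)))) UNIV"
proof -
  have h1: "((\<lambda>m. f (int m)) has_sum (\<Sum>m. f (int m))) UNIV"
    by (rule norm_summable_imp_has_sum) (use assms summable_rabs_cancel in \<open>auto intro: summable_sums\<close>)
  have h2: "((\<lambda>m. f (- int m - 1)) has_sum (\<Sum>m. f (- int m - 1))) UNIV"
    by (rule norm_summable_imp_has_sum) (use assms summable_rabs_cancel in \<open>auto intro: summable_sums\<close>)
  have i1: "inj (int :: nat \<Rightarrow> int)" by (rule injI) simp
  have i2: "inj (\<lambda>m::nat. - int m - 1)" by (rule injI) simp
  have a: "(f has_sum (\<Sum>m. f (int m))) (range int)"
    by (subst has_sum_reindex[OF i1]) (simp add: o_def h1)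
  have b: "(f has_sum (\<Sum>m. f (- int m - 1))) (range (\<lambda>m::nat. - int m - 1))"
    by (subst has_sum_reindex[OF i2]) (simp add: o_def h2)
  have U: "range int \<union> range (\<lambda>m::nat. - int m - 1) = UNIV"
  proof (rule set_eqI, rule iffI)
    fix n :: int
    show "n \<in> range int \<union> range (\<lambda>m::nat. - int m - 1)"
    proof (cases "n \<ge> 0")
      case True then have "n = int (nat n)" by simp
      then show ?thesis by blast
    next
      case False then have "n = - int (nat (- n - 1)) - 1" by simp
      then show ?thesis by blast
    qed
  qed simp
  have D: "range int \<inter> range (\<lambda>m::nat. - int m - 1) = {}" by auto
  show ?thesis using has_sum_Un_disjoint[OF a b D] unfolding U .
qed

lemma main_sum:
  assumes z: "z \<in> Bx" and k: "k \<ge> 1"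
    and M: "\<And>y. 0 \<le> y \<Longrightarrow> y \<le> 6 \<Longrightarrow> \<bar>\<phi> y\<bar> \<le> M"
    and \<phi>1: "\<And>y. 0 \<le> y \<Longrightarrow> y \<le> 1 \<Longrightarrow> \<bar>\<phi> y\<bar> \<le> y"
  shows "((\<lambda>n. \<phi> (AA z n) / (ss k - real_of_int n)) has_sum (loc \<phi> z k + Rr \<phi> z k)) UNIV"
proof -
  have Mv: "\<And>m. \<bar>\<phi> (vv z m)\<bar> \<le> M" using M vv_bounds[OF z] by blast
  have s: "summable (\<lambda>m. \<bar>gB \<phi> z k m\<bar>)" by (rule gB_summable[OF k, where \<phi>=\<phi> and z=z and M=M, OF Mv])
  have h1: "((\<lambda>n. if n \<in> Pos then gB \<phi> z k (inv pp n) else 0) has_sum suminf (gB \<phi> z k)) UNIV"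
    by (rule block_has_sum[OF s])
  have h2: "(hb \<phi> k has_sum bgs \<phi> k) UNIV"
    using int_has_sum[OF bgs_bound(1,2)[OF \<phi>1]] unfolding bgs_def .
  have e: "(\<lambda>n. \<phi> (AA z n) / (ss k - real_of_int n)) = (\<lambda>n. (if n \<in> Pos then gB \<phi> z k (inv pp n) else 0) + hb \<phi> k n)"
  proof
    fix n
    show "\<phi> (AA z n) / (ss k - real_of_int n) = (if n \<in> Pos then gB \<phi> z k (inv pp n) else 0) + hb \<phi> k n"
    proof (cases "n \<in> Pos")
      case True
      then have "pp (inv pp n) = n" unfolding Pos_def by (simp add: f_inv_into_f)
      then show ?thesis using True by (simp add: AA_def gB_def hb_def)
    qed (simp add: AA_def hb_def)
  qed
  show ?thesis unfolding e using has_sum_add[OF h1 h2] gB_split[OF k, where \<phi>=\<phi> and z=z and M=M, OF Mv]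
    by (simp add: Rr_def add.assoc)
qed

definition TT :: "(nat\<times>bool \<Rightarrow> real) \<Rightarrow> (nat\<times>bool \<Rightarrow> real)" where
  "TT z kb = (if fst kb = 0 then 0 else if snd kb
     then yf (6/(real (fst kb))^2) (Rr id z (fst kb)) (Rr (\<lambda>x. x^2) z (fst kb))
     else xf (6/(real (fst kb))^2) (Rr id z (fst kb)) (Rr (\<lambda>x. x^2) z (fst kb)))"

lemma pow16: "(real k)^2 \<le> 16^k" "((real k)^2)^2 \<le> 16^k"
proof -
  have "k < 2^k" by (rule less_exp)
  then have "real k < real (2^k)" by (simp only: of_nat_less_iff)
  then have a: "real k \<le> 2^k" by simp
  have e: "((2::real)^k)^4 = 16^k"
  proof -
    have "((2::real)^k)^4 = (2^4)^k" by (metis power_mult mult.commute)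
    then show ?thesis by simp
  qed
  have "((real k)^2)^2 \<le> ((2::real)^k)^4"
  proof -
    have "((real k)^2)^2 = (real k)^4" by simp
    also have "\<dots> \<le> ((2::real)^k)^4" by (intro power_mono a) simp
    finally show ?thesis .
  qed
  then show "((real k)^2)^2 \<le> 16^k" unfolding e .
  have "(real k)^2 \<le> ((2::real)^k)^2" by (intro power_mono a) simp
  also have "\<dots> \<le> ((2::real)^k)^4" by (rule power_increasing) simp_all
  finally show "(real k)^2 \<le> 16^k" unfolding e .
qed

lemma g16: assumes "k \<ge> 1"
  shows "(1/16::real)^k \<le> 1 / (real k)^2" "(1/16::real)^k \<le> 1 / ((real k)^2)^2"
    "(real k)^2 * (1/16::real)^k \<le> 1" "(1/16::real)^k \<le> 1"
proof -
  have p: "(real k)^2 > 0" using assms by simp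
  show "(1/16::real)^k \<le> 1 / (real k)^2" using pow16(1)[of k] p by (simp add: power_divide divide_simps)
  show "(1/16::real)^k \<le> 1 / ((real k)^2)^2" using pow16(2)[of k] p by (simp add: power_divide divide_simps)
  show "(real k)^2 * (1/16::real)^k \<le> 1" using pow16(1)[of k] p by (simp add: power_divide divide_simps)
  show "(1/16::real)^k \<le> 1" by (simp add: power_le_one)
qed

lemma Rbounds:
  assumes z: "z \<in> Bx" and k: "k \<ge> 1"
  shows "\<bar>Rr id z k\<bar> \<le> 1/(20*(real k)^2)" "\<bar>Rr (\<lambda>x. x^2) z k\<bar> \<le> 1/((real k)^2)^2"
proof -
  have v: "0 \<le> vv z m" "vv z m \<le> 6" for m using vv_bounds[OF z] by auto
  have r1: "\<bar>rest id z k\<bar> \<le> 6 * (1/250) * (1/16)^k"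
    by (rule rest_bound(2)[OF k]) (use v in auto)
  have b1: "\<bar>bgs id k\<bar> \<le> (12/1000) * (1/16)^k" by (rule bgs_bound(3)) auto
  have "\<bar>Rr id z k\<bar> \<le> (36/1000) * (1/16)^k" using r1 b1 unfolding Rr_def by linarith
  also have "\<dots> \<le> (36/1000) * (1 / (real k)^2)" by (intro mult_left_mono g16[OF k]) auto
  also have "\<dots> \<le> 1/(20*(real k)^2)" using k by (simp add: field_simps)
  finally show "\<bar>Rr id z k\<bar> \<le> 1/(20*(real k)^2)" .
  have sq: "\<bar>(vv z m)^2\<bar> \<le> 36" for m
  proof -
    have "(vv z m)^2 \<le> 6^2" using v[of m] by (intro power_mono) auto
    then show ?thesis by simp
  qed
  have r2: "\<bar>rest (\<lambda>x. x^2) z k\<bar> \<le> 36 * (1/250) * (1/16)^k"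
    by (rule rest_bound(2)[OF k]) (use sq in auto)
  have b2: "\<bar>bgs (\<lambda>x. x^2) k\<bar> \<le> (12/1000) * (1/16)^k"
    by (rule bgs_bound(3)) (simp add: power2_eq_square mult_left_le_one_le)
  have "\<bar>Rr (\<lambda>x. x^2) z k\<bar> \<le> (156/1000) * (1/16)^k" using r2 b2 unfolding Rr_def by linarith
  also have "\<dots> \<le> (156/1000) * (1 / ((real k)^2)^2)" by (intro mult_left_mono g16[OF k]) auto
  also have "\<dots> \<le> 1/((real k)^2)^2" using k by (simp add: field_simps)
  finally show "\<bar>Rr (\<lambda>x. x^2) z k\<bar> \<le> 1/((real k)^2)^2" .
qed

lemma Rlip:
  assumes z: "z \<in> Bx" and z': "z' \<in> Bx" and k: "k \<ge> 1" and d: "\<forall>i. \<bar>z i - z' i\<bar> \<le> \<delta>"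
  shows "\<bar>Rr id z k - Rr id z' k\<bar> \<le> \<delta> * (1/250) * (1/16)^k"
    "\<bar>Rr (\<lambda>x. x^2) z k - Rr (\<lambda>x. x^2) z' k\<bar> \<le> (12*\<delta>) * (1/250) * (1/16)^k"
proof -
  have v: "0 \<le> vv z m" "vv z m \<le> 6" "0 \<le> vv z' m" "vv z' m \<le> 6" for m using vv_bounds[OF z] vv_bounds[OF z'] by auto
  have vd: "\<bar>vv z m - vv z' m\<bar> \<le> \<delta>" for m by (rule vv_diff[OF d])
  show "\<bar>Rr id z k - Rr id z' k\<bar> \<le> \<delta> * (1/250) * (1/16)^k"
    unfolding Rr_def using rest_lip[OF k, of id z 6 z' \<delta>] v vd by simp
  have sq: "\<bar>(vv z m)^2\<bar> \<le> 36" "\<bar>(vv z' m)^2\<bar> \<le> 36" for m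
  proof -
    have "(vv z m)^2 \<le> 6^2" "(vv z' m)^2 \<le> 6^2" using v[of m] by (intro power_mono; simp)+
    then show "\<bar>(vv z m)^2\<bar> \<le> 36" "\<bar>(vv z' m)^2\<bar> \<le> 36" by simp_all
  qed
  have sqd: "\<bar>(vv z m)^2 - (vv z' m)^2\<bar> \<le> 12 * \<delta>" for m
  proof -
    have "\<bar>(vv z m)^2 - (vv z' m)^2\<bar> = \<bar>vv z m - vv z' m\<bar> * \<bar>vv z m + vv z' m\<bar>"
      by (simp add: power2_eq_square abs_mult[symmetric] algebra_simps)
    also have "\<dots> \<le> \<delta> * 12" using vd[of m] v[of m] by (intro mult_mono) auto
    finally show ?thesis by simp
  qed
  show "\<bar>Rr (\<lambda>x. x^2) z k - Rr (\<lambda>x. x^2) z' k\<bar> \<le> (12*\<delta>) * (1/250) * (1/16)^k"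
    unfolding Rr_def using rest_lip[OF k, of "\<lambda>x. x^2" z 36 z' "12*\<delta>"] sq sqd by simp
qed

lemma TT_vals:
  assumes z: "z \<in> Bx" and k: "k \<ge> 1"
  shows "1/(real k)^2 < TT z (k,False)" "TT z (k,False) < 3/(real k)^2"
    "0 < TT z (k,True)" "TT z (k,True) \<le> 5/(real k)^2"
proof -
  have u: "(real k)^2 \<ge> 1" using k by simp
  note A = AL1[OF u Rbounds(1)[OF z k] Rbounds(2)[OF z k]]
  have k0: "k \<noteq> 0" using k by simp
  show "1/(real k)^2 < TT z (k,False)" "TT z (k,False) < 3/(real k)^2"
    "0 < TT z (k,True)" "TT z (k,True) \<le> 5/(real k)^2"
    using A k0 by (simp_all add: TT_def)
qed

lemma TT_box: assumes z: "z \<in> Bx" shows "0 \<le> TT z i \<and> TT z i \<le> 5"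
proof (cases i)
  case (Pair k b)
  show ?thesis
  proof (cases "k = 0")
    case True then show ?thesis by (simp add: Pair TT_def)
  next
    case False
    then have k: "k \<ge> 1" by simp
    have u: "(real k)^2 \<ge> 1" using k by simp
    have i1: "1/(real k)^2 \<le> 1" using u k by (auto simp: divide_le_eq_1)
    have i0: "0 < 1/(real k)^2" using k by simp
    have "3/(real k)^2 \<le> 3" "5/(real k)^2 \<le> 5" using i1 by (simp_all add: divide_le_eq)
    then show ?thesis using TT_vals[OF z k] i0 by (cases b) (auto simp: Pair)
  qed
qed

lemma TT_lip:
  assumes z: "z \<in> Bx" and z': "z' \<in> Bx" and d: "\<forall>i. \<bar>z i - z' i\<bar> \<le> \<delta>"
  shows "\<forall>i. \<bar>TT z i - TT z' i\<bar> \<le> \<delta>/2"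
proof
  fix i :: "nat \<times> bool"
  have d0: "\<delta> \<ge> 0" using d by (meson abs_ge_zero order_trans)
  obtain k b where i: "i = (k,b)" by (cases i)
  show "\<bar>TT z i - TT z' i\<bar> \<le> \<delta>/2"
  proof (cases "k = 0")
    case True then show ?thesis using d0 by (simp add: i TT_def)
  next
    case False
    then have k: "k \<ge> 1" by simp
    define u where "u = (real k)^2"
    have u: "u \<ge> 1" using k by (simp add: u_def)
    define g where "g = (1/16::real)^k"
    have ug: "u * g \<le> 1" "g \<le> 1" using g16[OF k] by (simp_all add: u_def g_def)
    have g0: "g \<ge> 0" by (simp add: g_def)
    define R1 R2 P1 P2 where "R1 = Rr id z k" "R2 = Rr id z' k" "P1 = Rr (\<lambda>x. x^2) z k" "P2 = Rr (\<lambda>x. x^2) z' k"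
    have L: "\<bar>R1 - R2\<bar> \<le> \<delta> * (1/250) * g" "\<bar>P1 - P2\<bar> \<le> (12*\<delta>) * (1/250) * g"
      using Rlip[OF z z' k d] by (simp_all add: R1_R2_P1_P2_def g_def)
    have B: "\<bar>R1\<bar> \<le> 1/(20*u)" "\<bar>R2\<bar> \<le> 1/(20*u)" "\<bar>P1\<bar> \<le> 1/u^2" "\<bar>P2\<bar> \<le> 1/u^2"
      using Rbounds[OF z k] Rbounds[OF z' k] by (simp_all add: R1_R2_P1_P2_def u_def)
    note A = AL2[OF u B]
    have t1: "(u/4) * \<bar>P1 - P2\<bar> \<le> (3*\<delta>/250)"
    proof -
      have "(u/4) * \<bar>P1 - P2\<bar> \<le> (u/4) * ((12*\<delta>) * (1/250) * g)" using u by (intro mult_left_mono L(2)) auto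
      also have "\<dots> = (3*\<delta>/250) * (u * g)" by simp
      also have "\<dots> \<le> (3*\<delta>/250) * 1" using d0 ug by (intro mult_left_mono) auto
      finally show ?thesis by simp
    qed
    have t2: "5 * \<bar>R1 - R2\<bar> \<le> 5*\<delta>/250"
    proof -
      have "\<delta> * (1/250) * g \<le> \<delta> * (1/250) * 1" using d0 ug by (intro mult_left_mono) auto
      then show ?thesis using L(1) by simp
    qed
    have e: "TT z i = (if b then yf (6/u) R1 P1 else xf (6/u) R1 P1)" "TT z' i = (if b then yf (6/u) R2 P2 else xf (6/u) R2 P2)"
      using False by (simp_all add: i TT_def u_def R1_R2_P1_P2_def)
    show ?thesis unfolding e using A t1 t2 d0 by (cases b) auto
  qed
qed

lemma fixpoint: "\<exists>z\<in>Bx. TT z = z"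
  unfolding Bx_def
proof (rule contraction_fix)
  show "0 \<le> (5::real)" by simp
  show "\<And>z i. z \<in> {z. \<forall>i. 0 \<le> z i \<and> z i \<le> 5} \<Longrightarrow> 0 \<le> TT z i \<and> TT z i \<le> 5"
    using TT_box unfolding Bx_def by blast
  show "\<And>z z' \<delta>. z \<in> {z. \<forall>i. 0 \<le> z i \<and> z i \<le> 5} \<Longrightarrow> z' \<in> {z. \<forall>i. 0 \<le> z i \<and> z i \<le> 5} \<Longrightarrow>
      \<forall>i. \<bar>z i - z' i\<bar> \<le> \<delta> \<Longrightarrow> \<forall>i. \<bar>TT z i - TT z' i\<bar> \<le> \<delta> / 2"
    using TT_lip unfolding Bx_def by blast
qed

lemma eqs:
  assumes z: "z \<in> Bx" and fx: "TT z = z" and k: "k \<ge> 1"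
  shows "loc id z k + Rr id z k = 0" "loc (\<lambda>x. x^2) z k + Rr (\<lambda>x. x^2) z k = 0"
proof -
  define u where "u = (real k)^2"
  have u: "u \<ge> 1" using k by (simp add: u_def)
  define R P where "R = Rr id z k" "P = Rr (\<lambda>x. x^2) z k"
  have t: "tt k = 6/u" by (simp add: tt_def u_def)
  have k0: "k \<noteq> 0" using k by simp
  have x: "z (k,False) = xf (6/u) R P" using fun_cong[OF fx, of "(k,False)"] k0 by (simp add: TT_def u_def R_P_def)
  have y: "z (k,True) = yf (6/u) R P" using fun_cong[OF fx, of "(k,True)"] k0 by (simp add: TT_def u_def R_P_def)
  have bR: "\<bar>R\<bar> \<le> 1/(20*u)" "\<bar>P\<bar> \<le> 1/u^2" using Rbounds[OF z k] by (simp_all add: u_def R_P_def)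
  have D: "Dd (6/u) R \<ge> 1/u" by (rule AL1(1)[OF u bR])
  have D0: "Dd (6/u) R > 0" using D u by (smt (verit) divide_pos_pos)
  have m: "xf (6/u) R P - yf (6/u) R P = - Dd (6/u) R"
    unfolding xf_def yf_def by (simp add: diff_divide_distrib add_divide_distrib)
  have p: "xf (6/u) R P + yf (6/u) R P = Ee (6/u) P / Dd (6/u) R"
    unfolding xf_def yf_def by (simp add: diff_divide_distrib add_divide_distrib)
  show "loc id z k + Rr id z k = 0"
    unfolding loc_def x y t R_P_def[symmetric] using m by (simp add: Dd_def algebra_simps)
  have sq: "(xf (6/u) R P)^2 - (yf (6/u) R P)^2 = - Ee (6/u) P"
  proof -
    have "(xf (6/u) R P)^2 - (yf (6/u) R P)^2 = (xf (6/u) R P - yf (6/u) R P) * (xf (6/u) R P + yf (6/u) R P)"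
      by (simp add: power2_eq_square algebra_simps)
    also have "\<dots> = - Ee (6/u) P" unfolding m p using D0 by simp
    finally show ?thesis .
  qed
  show "loc (\<lambda>x. x^2) z k + Rr (\<lambda>x. x^2) z k = 0"
    unfolding loc_def x y t R_P_def[symmetric] using sq by (simp add: Ee_def algebra_simps)
qed

lemma sc_zero:
  assumes "((\<lambda>n. b n / (s - real_of_int n)) has_sum 0) UNIV"
  shows "sin_cauchy b (of_real s) = 0"
proof -
  have "((\<lambda>n. complex_of_real (b n / (s - real_of_int n))) has_sum of_real 0) UNIV"
    by (rule has_sum_of_real[OF assms])
  then have "((\<lambda>n. complex_of_real (b n) / (complex_of_real s - of_int n)) has_sum 0) UNIV"
    by simp
  then have "(\<Sum>\<^sub>\<infinity>n\<in>(UNIV::int set). complex_of_real (b n) / (complex_of_real s - of_int n)) = 0"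
    by (rule infsumI)
  then show ?thesis by (simp add: sin_cauchy_def)
qed

lemma z_decay:
  assumes z: "z \<in> Bx" and fx: "TT z = z" and j: "j \<ge> 1"
  shows "0 < z (j,b) \<and> z (j,b) \<le> 6/(real j)^2"
proof -
  have "z (j,b) = TT z (j,b)" using fx by simp
  moreover have "1/(real j)^2 > 0" using j by simp
  ultimately show ?thesis using TT_vals[OF z j] by (cases b) auto
qed

lemma vv_decay:
  assumes z: "z \<in> Bx" and fx: "TT z = z"
  shows "0 < vv z m \<and> \<bar>vv z m\<bar> \<le> 54 * inverse ((real (Suc m))^2)"
proof -
  define j where "j = m div 3 + 1"
  have j1: "j \<ge> 1" by (simp add: j_def)
  have v: "0 < vv z m \<and> vv z m \<le> 6/(real j)^2"
    using z_decay[OF z fx j1] tt_bounds[OF j1] unfolding vv_def j_def[symmetric] by (auto simp: tt_def)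
  have mj: "real (Suc m) \<le> 3 * real j" unfolding j_def by simp
  have "(real (Suc m))^2 \<le> (3 * real j)^2" using mj by (intro power_mono) auto
  then have "(real (Suc m))^2 \<le> 9 * (real j)^2" by (simp add: power_mult_distrib)
  then have "6/(real j)^2 \<le> 54 / (real (Suc m))^2" using j1 by (simp add: field_simps)
  then show ?thesis using v by (simp add: inverse_eq_divide)
qed

theorem proposition4p1:
  shows "\<exists>(a :: int \<Rightarrow> real) (nk :: nat \<Rightarrow> nat).
     (\<lambda>n. norm (a n)) summable_on (UNIV :: int set) \<and>
     (\<forall>n. a n > 0) \<and>
     nk 1 \<ge> 1 \<and>
     (\<forall>k\<ge>1. nk (Suc k) > 2 * nk k) \<and>
     (\<forall>k\<ge>1. sin_cauchy a (of_real (real (nk k) + 1/2)) = 0 \<and>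
              sin_cauchy (\<lambda>n. (a n)\<^sup>2) (of_real (real (nk k) + 1/2)) = 0) \<and>
     (\<forall>k\<ge>1. \<exists>\<alpha>::real. 1 < \<alpha> \<and> \<alpha> < 3 \<and> a (int (nk k)) = \<alpha> / (real k)\<^sup>2)"
proof -
  obtain z where z: "z \<in> Bx" and fx: "TT z = z" using fixpoint by blast
  have dec: "0 < vv z m" "\<bar>vv z m\<bar> \<le> 54 * inverse ((real (Suc m))^2)" for m
    using vv_decay[OF z fx] by auto
  have S1: "(\<lambda>n. norm (AA z n)) summable_on (UNIV :: int set)"
  proof -
    have sI: "summable (\<lambda>m. 54 * inverse ((real (Suc m))^2))"
    proof -
      have "summable (\<lambda>m. inverse ((real m)^2))" by (rule inverse_power_summable) simp
      then have "summable (\<lambda>m. inverse ((real (Suc m))^2))" by (subst summable_Suc_iff)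
      then show ?thesis by (rule summable_mult)
    qed
    have s1: "summable (\<lambda>m. \<bar>\<bar>vv z m\<bar>\<bar>)"
      by (rule summable_comparison_test'[OF sI, of 0]) (use dec in simp)
    have h1: "((\<lambda>n. if n \<in> Pos then \<bar>vv z (inv pp n)\<bar> else 0) has_sum (\<Sum>m. \<bar>vv z m\<bar>)) UNIV"
      by (rule block_has_sum[OF s1])
    have g4: "summable (\<lambda>m. (1/4::real)^m)" by (rule summable_geometric) simp
    have b1: "summable (\<lambda>m. \<bar>bg (int m)\<bar>)" using g4 by (simp add: bg_def)
    have b2: "summable (\<lambda>m. \<bar>bg (- int m - 1)\<bar>)"
    proof -
      have "nat \<bar>- int m - 1\<bar> = Suc m" for m by simp
      then have e: "(\<lambda>m. \<bar>bg (- int m - 1)\<bar>) = (\<lambda>m. (1/4) * (1/4::real)^m)" by (simp add: bg_def)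
      show ?thesis unfolding e by (rule summable_mult[OF g4])
    qed
    note h2 = int_has_sum[OF b1 b2]
    have "(\<lambda>n. (if n \<in> Pos then \<bar>vv z (inv pp n)\<bar> else 0) + bg n) summable_on UNIV"
      using has_sum_add[OF h1 h2] by (rule has_sum_imp_summable)
    then show ?thesis
    proof (rule summable_on_comparison_test)
      fix n :: int
      show "norm (AA z n) \<le> (if n \<in> Pos then \<bar>vv z (inv pp n)\<bar> else 0) + bg n"
        using bg_facts(1)[of n] by (auto simp: AA_def)
      show "0 \<le> norm (AA z n)" by simp
    qed
  qed
  have S2: "AA z n > 0" for n
    using dec bg_facts(1)[of n] by (auto simp: AA_def)
  have S5: "sin_cauchy (AA z) (of_real (real (NN k) + 1/2)) = 0 \<and>
     sin_cauchy (\<lambda>n. (AA z n)\<^sup>2) (of_real (real (NN k) + 1/2)) = 0" if k: "k \<ge> 1" for k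
  proof
    have e: "real (NN k) + 1/2 = ss k" by (simp add: ss_def)
    have h: "((\<lambda>n. id (AA z n) / (ss k - real_of_int n)) has_sum (loc id z k + Rr id z k)) UNIV"
      by (rule main_sum[OF z k, of id 6]) auto
    show "sin_cauchy (AA z) (of_real (real (NN k) + 1/2)) = 0"
      unfolding e by (rule sc_zero) (use h eqs(1)[OF z fx k] in simp)
    have h2: "((\<lambda>n. (AA z n)^2 / (ss k - real_of_int n)) has_sum (loc (\<lambda>x. x^2) z k + Rr (\<lambda>x. x^2) z k)) UNIV"
    proof (rule main_sum[OF z k, of "\<lambda>x. x^2" 36])
      fix y :: real assume "0 \<le> y" "y \<le> 6"
      then have "y^2 \<le> 6^2" by (intro power_mono) auto
      then show "\<bar>y^2\<bar> \<le> 36" by simp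
    next
      fix y :: real assume "0 \<le> y" "y \<le> 1"
      then show "\<bar>y^2\<bar> \<le> y" by (simp add: power2_eq_square mult_left_le_one_le)
    qed
    show "sin_cauchy (\<lambda>n. (AA z n)\<^sup>2) (of_real (real (NN k) + 1/2)) = 0"
      unfolding e by (rule sc_zero) (use h2 eqs(2)[OF z fx k] in simp)
  qed
  have S6: "\<exists>\<alpha>::real. 1 < \<alpha> \<and> \<alpha> < 3 \<and> AA z (int (NN k)) = \<alpha> / (real k)\<^sup>2" if k: "k \<ge> 1" for k
  proof -
    obtain j where kj: "k = Suc j" using k by (cases k) auto
    have p: "int (NN k) = pp (3*j+1)" using block_pos(2)[of j] by (simp add: kj)
    have a1: "AA z (pp (3*j+1)) = vv z (3*j+1)" by (simp add: AA_def Pos_def)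
    have a: "AA z (int (NN k)) = z (k,False)"
    proof -
      have "AA z (int (NN k)) = AA z (pp (3*j+1))" by (simp only: p)
      also have "\<dots> = vv z (3*j+1)" by (rule a1)
      also have "\<dots> = z (Suc j, False)" by (rule block_pos(5))
      finally show ?thesis by (simp only: kj)
    qed
    have x: "z (k,False) = TT z (k,False)" using fx by simp
    have kp: "(real k)^2 > 0" using k by simp
    have b: "1/(real k)^2 < z (k,False)" "z (k,False) < 3/(real k)^2" using TT_vals[OF z k] x by simp_all
    show ?thesis
    proof (intro exI conjI)
      show "1 < z (k,False) * (real k)^2" using b(1) kp by (simp add: field_simps)
      show "z (k,False) * (real k)^2 < 3" using b(2) kp by (simp add: field_simps)
      show "AA z (int (NN k)) = z (k,False) * (real k)^2 / (real k)^2" using a kp by simp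
    qed
  qed
  show ?thesis
  proof (intro exI[of _ "AA z"] exI[of _ NN] conjI allI impI)
    show "(\<lambda>n. norm (AA z n)) summable_on UNIV" by (rule S1)
    show "AA z n > 0" for n by (rule S2)
    show "NN 1 \<ge> 1" by (simp add: NN_def)
    show "NN (Suc k) > 2 * NN k" for k by (simp add: NN_def)
  qed (use S5 S6 in auto)
qed

end
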